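(* Let $M$ be an entrywise nonnegative $m\times n$ real matrix and let $M=AW$ with $A\in\mathbb{R}_{\ge0}^{m\times r}$ and $W\in\mathbb{R}_{\ge0}^{r\times n}$. Then there exist $\tilde A\in\mathbb{R}_{\ge0}^{m\times r}$ and $\tilde W\in\mathbb{R}_{\ge0}^{r\times n}$ with $M=\tilde A\tilde W$ such that the factorization $M=\tilde A\tilde W$ is stable.
   Context: Notation: $M_i$ denotes the $i$-th column and $M^j$ the $j$-th row of a matrix $M$; for a set $S$ of column indices, $A_S$ is the submatrix of columns of $A$ indexed by $S$, and for a set $T$ of row indices $W^T$ is the submatrix of rows indexed by $T$. For a matrix $A$ with columns $A_1,\dots,A_r$, let $\mathrm{aff}(A)=\{\sum_i\alpha_iA_i:\alpha_i\ge0\ \forall i\}$ (the set of nonnegative combinations of the columns). Given $A$ ($m\times r$) and $v\in\mathbb{R}^m$, a subset $S\subseteq[r]$ of columns of $A$ is admissible for $v$ if $v\in\mathrm{aff}(A_S)$; analogously, a subset $T\subseteq[r]$ of rows of $W$ is admissible for a row vector $u\in\mathbb{R}^{1\times n}$ if $u$ is a nonnegative combination of the rows of $W^T$. Lexicographic ordering on subsets of $[r]$: if $|S|<|T|$ then $S$ precedes $T$; subsets of equal size are compared by the standard lexicographic order. The support of a vector is the set of indices of its nonzero entries. A factorization $M=AW$ (with $A,W$ nonnegative, inner dimension $r$) is stable if, letting $S_i$ be the lexicographically first subset of columns of $A$ admissible for $M_i$ and $T_j$ the lexicographically first subset of rows of $W$ admissible for $M^j$: (1) for each $i$, $W_i$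 is supported in $S_i$, and (2) for each $j$, the row $A^j$ is supported in $T_j$. *)

theory Defs
  imports Complex_Main
begin

text \<open>Matrices of varying size are represented as functions nat => nat => real;
  an m x n matrix M has entries M i j for i < m, j < n (0-based indices).
  Entries outside the index range are irrelevant.\<close>

definition nonneg_mat :: "nat \<Rightarrow> nat \<Rightarrow> (nat \<Rightarrow> nat \<Rightarrow> real) \<Rightarrow> bool" where
  "nonneg_mat p q X \<longleftrightarrow> (\<forall>i<p. \<forall>j<q. X i j \<ge> 0)"

definition is_factorization ::
  "nat \<Rightarrow> nat \<Rightarrow> nat \<Rightarrow> (nat \<Rightarrow> nat \<Rightarrow> real) \<Rightarrow> (nat \<Rightarrow> nat \<Rightarrow> real) \<Rightarrow> (nat \<Rightarrow> nat \<Rightarrow> real) \<Rightarrow> bool" where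
  "is_factorization m n r M A W \<longleftrightarrow> (\<forall>i<m. \<forall>j<n. M i j = (\<Sum>k<r. A i k * W k j))"

definition col_admissible ::
  "nat \<Rightarrow> nat \<Rightarrow> (nat \<Rightarrow> nat \<Rightarrow> real) \<Rightarrow> (nat \<Rightarrow> real) \<Rightarrow> nat set \<Rightarrow> bool" where
  "col_admissible m r A v S \<longleftrightarrow> S \<subseteq> {..<r} \<and>
     (\<exists>\<alpha>::nat \<Rightarrow> real. (\<forall>k\<in>S. \<alpha> k \<ge> 0) \<and> (\<forall>i<m. v i = (\<Sum>k\<in>S. \<alpha> k * A i k)))"

definition row_admissible ::
  "nat \<Rightarrow> nat \<Rightarrow> (nat \<Rightarrow> nat \<Rightarrow> real) \<Rightarrow> (nat \<Rightarrow> real) \<Rightarrow> nat set \<Rightarrow> bool" where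
  "row_admissible n r W u T \<longleftrightarrow> T \<subseteq> {..<r} \<and>
     (\<exists>\<beta>::nat \<Rightarrow> real. (\<forall>k\<in>T. \<beta> k \<ge> 0) \<and> (\<forall>j<n. u j = (\<Sum>k\<in>T. \<beta> k * W k j)))"

definition lex_precedes :: "nat set \<Rightarrow> nat set \<Rightarrow> bool" where
  "lex_precedes S T \<longleftrightarrow> card S < card T \<or>
     (card S = card T \<and>
      (sorted_list_of_set S, sorted_list_of_set T) \<in> lexord {(a, b). a < b})"

definition lex_first :: "(nat set \<Rightarrow> bool) \<Rightarrow> nat set \<Rightarrow> bool" where
  "lex_first P S \<longleftrightarrow> P S \<and> (\<forall>T. P T \<and> T \<noteq> S \<longrightarrow> lex_precedes S T)"

definition stable_factorization ::
  "nat \<Rightarrow> nat \<Rightarrow> nat \<Rightarrow> (nat \<Rightarrow> nat \<Rightarrow> real) \<Rightarrow> (nat \<Rightarrow> nat \<Rightarrow> real) \<Rightarrow> (nat \<Rightarrow> nat \<Rightarrow> real) \<Rightarrow> bool" where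
  "stable_factorization m n r M A W \<longleftrightarrow>
     (\<forall>i<n. \<forall>S. lex_first (col_admissible m r A (\<lambda>a. M a i)) S \<longrightarrow>
        (\<forall>k<r. k \<notin> S \<longrightarrow> W k i = 0)) \<and>
     (\<forall>j<m. \<forall>T. lex_first (row_admissible n r W (\<lambda>b. M j b)) T \<longrightarrow>
        (\<forall>k<r. k \<notin> T \<longrightarrow> A j k = 0))"

end

theory Submission
  imports Defs
begin

lemma lp_irrefl: "\<not> lex_precedes S S"
  unfolding lex_precedes_def using lexord_irreflexive[of "{(a::nat, b). a < b}"] by auto

lemma lp_trans: "lex_precedes S T \<Longrightarrow> lex_precedes T U \<Longrightarrow> lex_precedes S U"
proof -
  have tr: "trans {(a::nat, b). a < b}" by (auto simp: trans_def)
  assume a: "lex_precedes S T" "lex_precedes T U"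
  show ?thesis
  proof (cases "card S < card T \<or> card T < card U")
    case True
    then show ?thesis using a unfolding lex_precedes_def by linarith
  next
    case False
    then have c: "card S = card T" "card T = card U"
      "(sorted_list_of_set S, sorted_list_of_set T) \<in> lexord {(a, b). a < b}"
      "(sorted_list_of_set T, sorted_list_of_set U) \<in> lexord {(a, b). a < b}"
      using a unfolding lex_precedes_def by auto
    have "(sorted_list_of_set S, sorted_list_of_set U) \<in> lexord {(a, b). a < b}"
      by (rule lexord_trans[OF c(3) c(4) tr])
    then show ?thesis using c unfolding lex_precedes_def by simp
  qed
qed

definition rk :: "nat \<Rightarrow> nat set \<Rightarrow> nat" where
  "rk r S = card {T. T \<subseteq> {..<r} \<and> lex_precedes T S}"

lemma rk_mono:
  assumes "S \<subseteq> {..<r}" "lex_precedes S T"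
  shows "rk r S < rk r T"
proof -
  have "{U. U \<subseteq> {..<r} \<and> lex_precedes U S} \<subset> {U. U \<subseteq> {..<r} \<and> lex_precedes U T}"
  proof (rule psubsetI)
    show "{U. U \<subseteq> {..<r} \<and> lex_precedes U S} \<subseteq> {U. U \<subseteq> {..<r} \<and> lex_precedes U T}"
    proof
      fix U assume "U \<in> {U. U \<subseteq> {..<r} \<and> lex_precedes U S}"
      then show "U \<in> {U. U \<subseteq> {..<r} \<and> lex_precedes U T}"
        using lp_trans[of U S T] assms(2) by simp
    qed
    have "S \<in> {U. U \<subseteq> {..<r} \<and> lex_precedes U T}" using assms by simp
    moreover have "S \<notin> {U. U \<subseteq> {..<r} \<and> lex_precedes U S}" using lp_irrefl[of S] by simp
    ultimately show "{U. U \<subseteq> {..<r} \<and> lex_precedes U S} \<noteq> {U. U \<subseteq> {..<r} \<and> lex_precedes U T}"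
      by blast
  qed
  moreover have "finite {U. U \<subseteq> {..<r} \<and> lex_precedes U T}"
    by (rule finite_subset[of _ "Pow {..<r}"]) auto
  ultimately show ?thesis unfolding rk_def by (rule psubset_card_mono[rotated])
qed

definition suppc :: "nat \<Rightarrow> (nat \<Rightarrow> nat \<Rightarrow> real) \<Rightarrow> nat \<Rightarrow> nat set" where
  "suppc r W i = {k. k < r \<and> W k i \<noteq> 0}"

definition pot :: "nat \<Rightarrow> nat \<Rightarrow> (nat \<Rightarrow> nat \<Rightarrow> real) \<Rightarrow> nat" where
  "pot n r W = (\<Sum>i<n. rk r (suppc r W i))"

lemma improve:
  assumes nn: "nonneg_mat r n W" and f: "is_factorization m n r M A W" and i: "i < n"
    and lf: "lex_first (col_admissible m r A (\<lambda>a. M a i)) S"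
    and k: "k < r" "k \<notin> S" "W k i \<noteq> 0"
  shows "\<exists>W'. nonneg_mat r n W' \<and> is_factorization m n r M A W' \<and> pot n r W' < pot n r W"
proof -
  have adm: "col_admissible m r A (\<lambda>a. M a i) S" using lf unfolding lex_first_def by auto
  then obtain \<alpha> where Sr: "S \<subseteq> {..<r}" and ap: "\<forall>k\<in>S. \<alpha> k \<ge> 0"
    and as: "\<forall>a<m. M a i = (\<Sum>k\<in>S. \<alpha> k * A a k)"
    unfolding col_admissible_def by auto
  have finS: "finite S" using Sr finite_subset by blast
  define W' where "W' = (\<lambda>k j. if j = i then (if k \<in> S then \<alpha> k else 0) else W k j)"
  have nn': "nonneg_mat r n W'" using nn ap unfolding nonneg_mat_def W'_def by auto
  have f': "is_factorization m n r M A W'"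
    unfolding is_factorization_def
  proof (intro allI impI)
    fix a j assume a: "a < m" "j < n"
    show "M a j = (\<Sum>k<r. A a k * W' k j)"
    proof (cases "j = i")
      case True
      have "(\<Sum>k<r. A a k * W' k j) = (\<Sum>k<r. if k \<in> S then \<alpha> k * A a k else 0)"
        by (rule sum.cong) (auto simp: W'_def True)
      also have "\<dots> = (\<Sum>k\<in>{..<r} \<inter> S. \<alpha> k * A a k)"
        by (simp add: sum.inter_restrict)
      also have "{..<r} \<inter> S = S" using Sr by auto
      finally show ?thesis using as a True by simp
    next
      case False
      then show ?thesis using f a unfolding is_factorization_def W'_def by simp
    qed
  qed
  define P where "P = suppc r W i"
  have Pr: "P \<subseteq> {..<r}" unfolding P_def suppc_def by auto
  have Padm: "col_admissible m r A (\<lambda>a. M a i) P"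
    unfolding col_admissible_def
  proof (intro conjI exI[of _ "\<lambda>k. W k i"] allI impI ballI)
    show "P \<subseteq> {..<r}" by (rule Pr)
    fix k assume "k \<in> P" then show "0 \<le> W k i" using nn unfolding nonneg_mat_def P_def suppc_def
      using i by auto
  next
    fix a assume a: "a < m"
    have "M a i = (\<Sum>k<r. A a k * W k i)" using f a i unfolding is_factorization_def by auto
    also have "\<dots> = (\<Sum>k\<in>P. A a k * W k i)"
      by (rule sum.mono_neutral_right) (auto simp: P_def suppc_def)
    also have "\<dots> = (\<Sum>k\<in>P. W k i * A a k)" by (simp add: mult.commute)
    finally show "M a i = (\<Sum>k\<in>P. W k i * A a k)" .
  qed
  have "P \<noteq> S" using k unfolding P_def suppc_def by auto
  hence lpP: "lex_precedes S P" using lf Padm unfolding lex_first_def by auto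
  define S' where "S' = {k\<in>S. \<alpha> k \<noteq> 0}"
  have S'adm: "col_admissible m r A (\<lambda>a. M a i) S'"
    unfolding col_admissible_def
  proof (intro conjI exI[of _ \<alpha>] allI impI ballI)
    show "S' \<subseteq> {..<r}" using Sr by (auto simp: S'_def)
    fix k assume "k \<in> S'" then show "0 \<le> \<alpha> k" using ap by (auto simp: S'_def)
  next
    fix a assume a: "a < m"
    have "(\<Sum>k\<in>S. \<alpha> k * A a k) = (\<Sum>k\<in>S'. \<alpha> k * A a k)"
      by (rule sum.mono_neutral_right) (auto simp: S'_def finS)
    then show "M a i = (\<Sum>k\<in>S'. \<alpha> k * A a k)" using as a by simp
  qed
  have "S' = S"
  proof (rule ccontr)
    assume ne: "S' \<noteq> S"
    hence "lex_precedes S S'" using lf S'adm unfolding lex_first_def by auto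
    hence "card S \<le> card S'" unfolding lex_precedes_def by auto
    moreover have "S' \<subset> S" using ne by (auto simp: S'_def)
    hence "card S' < card S" using finS psubset_card_mono by blast
    ultimately show False by simp
  qed
  have supp': "suppc r W' i = S'" using Sr unfolding suppc_def W'_def S'_def by auto
  have lt: "rk r (suppc r W' i) < rk r (suppc r W i)"
    using rk_mono[OF Sr lpP] supp' \<open>S' = S\<close> P_def by simp
  have "pot n r W' < pot n r W"
    unfolding pot_def
  proof (rule sum_strict_mono_ex1)
    show "\<forall>x\<in>{..<n}. rk r (suppc r W' x) \<le> rk r (suppc r W x)"
    proof
      fix x assume "x \<in> {..<n}"
      show "rk r (suppc r W' x) \<le> rk r (suppc r W x)"
      proof (cases "x = i")
        case True then show ?thesis using lt by simp
      next
        case False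
        then have "suppc r W' x = suppc r W x" unfolding suppc_def W'_def by auto
        then show ?thesis by simp
      qed
    qed
    show "\<exists>a\<in>{..<n}. rk r (suppc r W' a) < rk r (suppc r W a)" using lt i by auto
  qed simp
  then show ?thesis using nn' f' by blast
qed

definition tr :: "(nat \<Rightarrow> nat \<Rightarrow> real) \<Rightarrow> (nat \<Rightarrow> nat \<Rightarrow> real)" where
  "tr X = (\<lambda>a b. X b a)"

lemma improve_row:
  assumes nn: "nonneg_mat m r A" and f: "is_factorization m n r M A W" and j: "j < m"
    and lf: "lex_first (row_admissible n r W (\<lambda>b. M j b)) T"
    and k: "k < r" "k \<notin> T" "A j k \<noteq> 0"
  shows "\<exists>A'. nonneg_mat m r A' \<and> is_factorization m n r M A' W \<and> pot m r (tr A') < pot m r (tr A)"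
proof -
  have nn2: "nonneg_mat r m (tr A)" using nn unfolding nonneg_mat_def tr_def by auto
  have f2: "is_factorization n m r (tr M) (tr W) (tr A)"
    using f unfolding is_factorization_def tr_def by (auto simp: mult.commute)
  have eq: "col_admissible n r (tr W) (\<lambda>a. tr M a j) = row_admissible n r W (\<lambda>b. M j b)"
    unfolding col_admissible_def row_admissible_def tr_def by simp
  have lf2: "lex_first (col_admissible n r (tr W) (\<lambda>a. tr M a j)) T" using lf eq by simp
  obtain W'' where w: "nonneg_mat r m W''" "is_factorization n m r (tr M) (tr W) W''"
     "pot m r W'' < pot m r (tr A)"
    using improve[OF nn2 f2 j lf2 k(1,2)] k(3) unfolding tr_def by auto
  have ttr: "tr (tr W'') = W''" unfolding tr_def by simp
  show ?thesis
  proof (intro exI[of _ "tr W''"] conjI)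
    show "nonneg_mat m r (tr W'')" using w(1) unfolding nonneg_mat_def tr_def by auto
    show "is_factorization m n r M (tr W'') W"
      using w(2) unfolding is_factorization_def tr_def by (auto simp: mult.commute)
    show "pot m r (tr (tr W'')) < pot m r (tr A)" using w(3) ttr by simp
  qed
qed

theorem mainTheorem3:
  fixes m n r :: nat and M A W :: "nat \<Rightarrow> nat \<Rightarrow> real"
  assumes "nonneg_mat m n M"
    and "nonneg_mat m r A"
    and "nonneg_mat r n W"
    and "is_factorization m n r M A W"
  shows "\<exists>A' W'. nonneg_mat m r A' \<and> nonneg_mat r n W' \<and>
           is_factorization m n r M A' W' \<and> stable_factorization m n r M A' W'"
proof -
  define Q where "Q = (\<lambda>p. nonneg_mat m r (fst p) \<and> nonneg_mat r n (snd p) \<and>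
      is_factorization m n r M (fst p) (snd p))"
  define \<Phi> where "\<Phi> = (\<lambda>p. pot n r (snd p) + pot m r (tr (fst p)))"
  have "Q (A, W)" using assms unfolding Q_def by simp
  then obtain p where p: "Q p" and pmin: "\<forall>q. Q q \<longrightarrow> \<Phi> p \<le> \<Phi> q"
    using ex_has_least_nat[of Q "(A,W)" \<Phi>] by blast
  obtain A0 W0 where pp: "p = (A0, W0)" by (cases p)
  have h: "nonneg_mat m r A0" "nonneg_mat r n W0" "is_factorization m n r M A0 W0"
    using p pp unfolding Q_def by auto
  have "stable_factorization m n r M A0 W0"
    unfolding stable_factorization_def
  proof (intro conjI allI impI)
    fix i S k assume a: "i < n" "lex_first (col_admissible m r A0 (\<lambda>a. M a i)) S" "k < r" "k \<notin> S"
    show "W0 k i = 0"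
    proof (rule ccontr)
      assume "W0 k i \<noteq> 0"
      then obtain W' where w: "nonneg_mat r n W'" "is_factorization m n r M A0 W'"
        "pot n r W' < pot n r W0" using improve[OF h(2) h(3) a] by blast
      have "Q (A0, W')" using w h unfolding Q_def by simp
      hence "\<Phi> p \<le> \<Phi> (A0, W')" using pmin by blast
      then show False using w(3) pp unfolding \<Phi>_def by simp
    qed
  next
    fix j T k assume a: "j < m" "lex_first (row_admissible n r W0 (\<lambda>b. M j b)) T" "k < r" "k \<notin> T"
    show "A0 j k = 0"
    proof (rule ccontr)
      assume "A0 j k \<noteq> 0"
      then obtain A' where w: "nonneg_mat m r A'" "is_factorization m n r M A' W0"
        "pot m r (tr A') < pot m r (tr A0)" using improve_row[OF h(1) h(3) a] by blast
      have "Q (A', W0)" using w h unfolding Q_def by simp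
      hence "\<Phi> p \<le> \<Phi> (A', W0)" using pmin by blast
      then show False using w(3) pp unfolding \<Phi>_def by simp
    qed
  qed
  then show ?thesis using h by blast
qed

end
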